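(* Let $n\ge 1$. For a canonical decorated permutation $(\pi,(a_1,\ldots,a_n))$ of $[n]$ with run decomposition $(B_0,B_1,B_2,\ldots)=(D^{(0)}_\pi,A^{(1)}_\pi,D^{(1)}_\pi,A^{(2)}_\pi,\ldots)$ (so $B_0=\{0\}$ and $B_k$ is the $k$-th block), define a tree $\tau$ on the vertex set $\{0,1,\ldots,n\}$, rooted at $0$, as follows: for $k\ge1$, each letter $\ell\in B_k$ with decoration $a_\ell=d$ is made a child of the $d$-th smallest element of $B_{k-1}$ if $k$ is odd, and of the $d$-th largest element of $B_{k-1}$ if $k$ is even, counting from $0$ (the smallest, resp. largest, element being the $0$-th). Then $\tau$ is an intransitive tree whose set of vertices at depth $k$ is $B_k$ for every $k$, and the map $(\pi,(a_i))\mapsto\tau$ is a bijection from the set of canonical decorated permutations of $[n]$ onto the set of intransitive trees on the vertex set $\{0,1,\ldots,n\}$.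
   Context: Permutations: for a permutation $\pi=\pi_1\cdots\pi_n$ of $[n]$, $\pi_i$ is an ascent top if $i=1$ or $\pi_{i-1}<\pi_i$, and a descent bottom if $\pi_{i-1}>\pi_i$. The run decomposition $\mathsf{RunDec}(\pi)=(D^{(0)}_\pi,A^{(1)}_\pi,D^{(1)}_\pi,A^{(2)}_\pi,\ldots)$ consists of $D^{(0)}_\pi=\{0\}$ followed by the letter sets of the maximal factors of $\pi$ consisting alternately of ascent tops ($A$-blocks) and descent bottoms ($D$-blocks); the first factor consists of ascent tops. A (stable) decorated permutation is a pair $(\pi,(a_1,\ldots,a_n))$ ($a_i$ attached to the letter $i$) with $0\le a_i<|\{j\in A^{(k)}_\pi: j>i,\ k\le\ell\}|$ if $i\in D^{(\ell)}_\pi$ and $0\le a_i<|\{j\in D^{(k)}_\pi: j<i,\ k<\ell\}|$ if $i\in A^{(\ell)}_\pi$. It is canonical if moreover $a_i<\mu_i(\pi)$ for all $i$, where $\mu_i(\pi)=|\{j\in A^{(\ell)}_\pi: j>i\}|$ if $i\in D^{(\ell)}_\pi$ and $\mu_i(\pi)=|\{j\in D^{(\ell-1)}_\pi: j<i\}|$ if $i\in A^{(\ell)}_\pi$. An intransitive tree (Postnikov) is a tree with distinct integer labels on its vertices such that every vertex's label is either smaller than the labels of all its neighbours or greater than the labels of all its neighbours. The depth of a vertex is its distance from the root $0$. *)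

theory Defs
  imports Main
begin

(* A permutation of [n] is a list pi with distinct pi and set pi = {1..n};
   positions are 0-indexed, so pi!i is the letter pi_(i+1) of the paper. *)

definition asctop :: "nat list \<Rightarrow> nat \<Rightarrow> bool" where
  "asctop pi i = (i = 0 \<or> pi ! (i - 1) < pi ! i)"

(* number of switches between ascent tops and descent bottoms up to position i:
   position i lies in the (runidx pi i + 1)-th maximal factor *)
definition runidx :: "nat list \<Rightarrow> nat \<Rightarrow> nat" where
  "runidx pi i = card {j. 1 \<le> j \<and> j \<le> i \<and> asctop pi j \<noteq> asctop pi (j - 1)}"

(* run decomposition: blk pi 0 = D^(0) = {0}, blk pi (2l-1) = A^(l), blk pi (2l) = D^(l) *)
definition blk :: "nat list \<Rightarrow> nat \<Rightarrow> nat set" where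
  "blk pi k = (if k = 0 then {0}
               else {pi ! i | i. i < length pi \<and> Suc (runidx pi i) = k})"

definition pos :: "nat list \<Rightarrow> nat \<Rightarrow> nat" where
  "pos pi l = (THE i. i < length pi \<and> pi ! i = l)"

definition lvl :: "nat list \<Rightarrow> nat \<Rightarrow> nat" where
  "lvl pi l = Suc (runidx pi (pos pi l))"

definition dec :: "nat list \<Rightarrow> nat \<Rightarrow> nat" where
  "dec a l = a ! (l - 1)"

definition stable_bound :: "nat list \<Rightarrow> nat \<Rightarrow> nat" where
  "stable_bound pi l = (let k = lvl pi l in
     if odd k then card {j \<in> \<Union>{blk pi m | m. m < k \<and> even m}. j < l}
     else card {j \<in> \<Union>{blk pi m | m. m < k \<and> odd m}. j > l})"

definition mu :: "nat list \<Rightarrow> nat \<Rightarrow> nat" where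
  "mu pi l = (let k = lvl pi l in
     if odd k then card {j \<in> blk pi (k - 1). j < l}
     else card {j \<in> blk pi (k - 1). j > l})"

definition decorated_perm :: "nat \<Rightarrow> nat list \<Rightarrow> nat list \<Rightarrow> bool" where
  "decorated_perm n pi a = (distinct pi \<and> set pi = {1..n} \<and> length a = n \<and>
      (\<forall>l\<in>set pi. dec a l < stable_bound pi l))"

definition canonical_dp :: "nat \<Rightarrow> nat list \<Rightarrow> nat list \<Rightarrow> bool" where
  "canonical_dp n pi a = (decorated_perm n pi a \<and> (\<forall>l\<in>set pi. dec a l < mu pi l))"

definition parent :: "nat list \<Rightarrow> nat list \<Rightarrow> nat \<Rightarrow> nat" where
  "parent pi a l = (let k = lvl pi l; s = sorted_list_of_set (blk pi (k - 1)) in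
     if odd k then s ! dec a l else rev s ! dec a l)"

definition tree_of :: "nat list \<Rightarrow> nat list \<Rightarrow> nat set set" where
  "tree_of pi a = {{l, parent pi a l} | l. l \<in> set pi}"

definition adj :: "nat set set \<Rightarrow> nat \<Rightarrow> nat \<Rightarrow> bool" where
  "adj E u v = ({u, v} \<in> E)"

definition is_graph :: "nat set \<Rightarrow> nat set set \<Rightarrow> bool" where
  "is_graph V E = (E \<subseteq> {{u, v} | u v. u \<in> V \<and> v \<in> V \<and> u \<noteq> v})"

definition is_walk :: "nat set set \<Rightarrow> nat list \<Rightarrow> bool" where
  "is_walk E vs = (vs \<noteq> [] \<and> (\<forall>i. Suc i < length vs \<longrightarrow> adj E (vs ! i) (vs ! Suc i)))"

definition connected_graph :: "nat set \<Rightarrow> nat set set \<Rightarrow> bool" where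
  "connected_graph V E = (\<forall>u\<in>V. \<forall>v\<in>V. \<exists>vs. is_walk E vs \<and> hd vs = u \<and> last vs = v)"

definition has_cycle :: "nat set set \<Rightarrow> bool" where
  "has_cycle E = (\<exists>vs. length vs \<ge> 3 \<and> distinct vs \<and> is_walk E vs \<and> adj E (last vs) (hd vs))"

definition is_tree :: "nat set \<Rightarrow> nat set set \<Rightarrow> bool" where
  "is_tree V E = (is_graph V E \<and> connected_graph V E \<and> \<not> has_cycle E)"

definition intransitive_tree :: "nat set \<Rightarrow> nat set set \<Rightarrow> bool" where
  "intransitive_tree V E = (is_tree V E \<and>
     (\<forall>v\<in>V. (\<forall>w. adj E v w \<longrightarrow> v < w) \<or> (\<forall>w. adj E v w \<longrightarrow> w < v)))"

definition depth :: "nat set set \<Rightarrow> nat \<Rightarrow> nat" where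
  "depth E v = (LEAST k. \<exists>vs. is_walk E vs \<and> length vs = Suc k \<and> hd vs = 0 \<and> last vs = v)"

end

theory Submission
  imports Defs "HOL-Library.Product_Lexorder"
begin


lemma adj_sym: "adj E u v = adj E v u"
  unfolding adj_def by (simp add: insert_commute)

lemma is_walk_single[simp]: "is_walk E [x]"
  unfolding is_walk_def by simp

lemma is_walk_Cons: "is_walk E (x # ws) \<longleftrightarrow> (ws = [] \<or> (is_walk E ws \<and> adj E x (hd ws)))"
proof (cases ws)
  case Nil then show ?thesis by simp
next
  case (Cons y ys)
  show ?thesis
  proof
    assume w: "is_walk E (x # ws)"
    have "adj E x (hd ws)" using w Cons unfolding is_walk_def by force
    moreover have "is_walk E ws" unfolding is_walk_def
    proof (intro conjI allI impI)
      show "ws \<noteq> []" using Cons by simp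
      fix i assume "Suc i < length ws"
      then show "adj E (ws ! i) (ws ! Suc i)" using w unfolding is_walk_def
        by (metis Suc_less_eq length_Cons nth_Cons_Suc)
    qed
    ultimately show "ws = [] \<or> (is_walk E ws \<and> adj E x (hd ws))" by simp
  next
    assume "ws = [] \<or> (is_walk E ws \<and> adj E x (hd ws))"
    then have w: "is_walk E ws" "adj E x (hd ws)" using Cons by auto
    show "is_walk E (x # ws)" unfolding is_walk_def
    proof (intro conjI allI impI)
      show "x # ws \<noteq> []" by simp
      fix i assume i: "Suc i < length (x # ws)"
      show "adj E ((x # ws) ! i) ((x # ws) ! Suc i)"
      proof (cases i)
        case 0 then show ?thesis using w Cons by simp
      next
        case (Suc j) then show ?thesis using w i unfolding is_walk_def by simp
      qed
    qed
  qed
qed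

lemma is_walk_append:
  "is_walk E xs \<Longrightarrow> is_walk E ys \<Longrightarrow> last xs = hd ys \<Longrightarrow> is_walk E (xs @ tl ys)"
proof (induction xs)
  case Nil then show ?case by (simp add: is_walk_def)
next
  case (Cons x xs)
  show ?case
  proof (cases "xs = []")
    case True
    then have "x # tl ys = ys" using Cons.prems
      by (metis is_walk_def last_ConsL list.collapse)
    then show ?thesis using True Cons.prems by simp
  next
    case False
    then have "is_walk E xs" "adj E x (hd xs)" using Cons.prems(1) is_walk_Cons by auto
    then have "is_walk E (xs @ tl ys)" using Cons False by simp
    then show ?thesis using False \<open>adj E x (hd xs)\<close> is_walk_Cons[of E x "xs @ tl ys"] by simp
  qed
qed

lemma is_walk_snoc:
  assumes "is_walk E xs" "adj E (last xs) y" shows "is_walk E (xs @ [y])"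
proof -
  have "is_walk E [last xs, y]" using assms(2) is_walk_Cons by simp
  from is_walk_append[OF assms(1) this] show ?thesis by simp
qed

lemma is_walk_rev: "is_walk E vs \<Longrightarrow> is_walk E (rev vs)"
proof (induction vs)
  case Nil then show ?case by (simp add: is_walk_def)
next
  case (Cons x xs)
  show ?case
  proof (cases "xs = []")
    case True then show ?thesis by simp
  next
    case False
    then have "is_walk E xs" "adj E x (hd xs)" using Cons.prems is_walk_Cons by auto
    then have "is_walk E (rev xs)" using Cons.IH by simp
    moreover have "adj E (last (rev xs)) x" using \<open>adj E x (hd xs)\<close> False
      by (simp add: last_rev adj_sym)
    ultimately show ?thesis using is_walk_snoc by fastforce
  qed
qed

lemma is_walk_take: "is_walk E vs \<Longrightarrow> 0 < k \<Longrightarrow> is_walk E (take k vs)"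
  unfolding is_walk_def by auto

lemma walk_cyclic_adj:
  assumes "is_walk E vs" "adj E (last vs) (hd vs)" "i < length vs"
  shows "adj E (vs ! i) (vs ! (if Suc i = length vs then 0 else Suc i))"
proof (cases "Suc i = length vs")
  case True
  then have "vs ! i = last vs" by (metis diff_Suc_1 last_conv_nth list.size(3) nat.distinct(1))
  moreover have "vs ! 0 = hd vs" using assms by (simp add: hd_conv_nth is_walk_def)
  ultimately show ?thesis using True assms by simp
next
  case False then show ?thesis using assms unfolding is_walk_def by simp
qed



locale ptree =
  fixes V :: "nat set" and par :: "nat \<Rightarrow> nat" and h :: "nat \<Rightarrow> nat" and E :: "nat set set"
  assumes root: "0 \<in> V" and h0: "h 0 = 0"
    and parV: "\<And>v. v \<in> V \<Longrightarrow> v \<noteq> 0 \<Longrightarrow> par v \<in> V \<and> Suc (h (par v)) = h v"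
    and Edef: "E = {{v, par v} | v. v \<in> V \<and> v \<noteq> 0}"
begin

lemma adj_iff: "adj E x y \<longleftrightarrow> (x \<in> V \<and> x \<noteq> 0 \<and> y = par x) \<or> (y \<in> V \<and> y \<noteq> 0 \<and> x = par y)"
  unfolding adj_def Edef by (auto simp: doubleton_eq_iff)

lemma adj_h: "adj E x y \<Longrightarrow> x \<in> V \<and> y \<in> V \<and> (h y = Suc (h x) \<or> h x = Suc (h y))"
  using adj_iff parV by metis

lemma adj_down: "adj E x y \<Longrightarrow> h y < h x \<Longrightarrow> y = par x"
  using adj_iff parV by (metis Suc_lessD less_not_refl3)

lemma walk_root: "v \<in> V \<Longrightarrow> \<exists>vs. is_walk E vs \<and> hd vs = v \<and> last vs = 0 \<and> length vs = Suc (h v)"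
proof (induction "h v" arbitrary: v)
  case 0
  then have "v = 0" using parV by fastforce
  then show ?case using 0 by (intro exI[of _ "[0]"]) simp
next
  case (Suc m)
  have v0: "v \<noteq> 0"
  proof
    assume "v = 0" then show False using Suc.hyps(2) h0 by simp
  qed
  then have p: "par v \<in> V" "Suc (h (par v)) = h v" using parV Suc.prems by auto
  then obtain ws where ws: "is_walk E ws" "hd ws = par v" "last ws = 0" "length ws = Suc (h (par v))"
    using Suc by (metis Suc_inject)
  have "adj E v (hd ws)" using ws v0 Suc.prems adj_iff by auto
  then have "is_walk E (v # ws)" using ws is_walk_Cons by auto
  moreover have "ws \<noteq> []" using ws by auto
  ultimately show ?case using ws p by (intro exI[of _ "v # ws"]) auto
qed

lemma walk_h_bound: "is_walk E vs \<Longrightarrow> h (last vs) \<le> h (hd vs) + (length vs - 1)"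
proof (induction vs)
  case Nil then show ?case by (simp add: is_walk_def)
next
  case (Cons x ws)
  show ?case
  proof (cases "ws = []")
    case True then show ?thesis by simp
  next
    case False
    then have "is_walk E ws" "adj E x (hd ws)" using Cons.prems is_walk_Cons by auto
    then have "h (last ws) \<le> h (hd ws) + (length ws - 1)" "h (hd ws) \<le> Suc (h x)"
      using Cons.IH adj_h by force+
    then show ?thesis using False by (cases ws) auto
  qed
qed

lemma depth_eq: assumes "v \<in> V" shows "depth E v = h v"
proof -
  obtain vs where vs: "is_walk E vs" "hd vs = v" "last vs = 0" "length vs = Suc (h v)"
    using walk_root assms by blast
  have r: "is_walk E (rev vs)" "length (rev vs) = Suc (h v)" "hd (rev vs) = 0" "last (rev vs) = v"
    using vs is_walk_rev by (auto simp: hd_rev last_rev)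
  show ?thesis unfolding depth_def
  proof (rule Least_equality)
    show "\<exists>vs. is_walk E vs \<and> length vs = Suc (h v) \<and> hd vs = 0 \<and> last vs = v" using r by blast
  next
    fix k assume "\<exists>vs. is_walk E vs \<and> length vs = Suc k \<and> hd vs = 0 \<and> last vs = v"
    then obtain ws where "is_walk E ws" "length ws = Suc k" "hd ws = 0" "last ws = v" by blast
    then show "h v \<le> k" using walk_h_bound[of ws] h0 by auto
  qed
qed

lemma is_graph: "is_graph V E"
  unfolding is_graph_def Edef using parV by fastforce

lemma connected: "connected_graph V E"
  unfolding connected_graph_def
proof (intro ballI)
  fix u v assume uv: "u \<in> V" "v \<in> V"
  obtain xs where xs: "is_walk E xs" "hd xs = u" "last xs = 0"
    using walk_root uv by blast
  obtain ys where ys: "is_walk E ys" "hd ys = v" "last ys = 0"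
    using walk_root uv by blast
  have "is_walk E (rev ys)" "hd (rev ys) = 0" "last (rev ys) = v" using ys is_walk_rev
    by (auto simp: hd_rev last_rev is_walk_def)
  then have "is_walk E (xs @ tl (rev ys))" using is_walk_append xs by metis
  moreover have "hd (xs @ tl (rev ys)) = u" using xs by (auto simp: is_walk_def)
  moreover have "last (xs @ tl (rev ys)) = v"
  proof (cases "tl (rev ys) = []")
    case True
    then have "rev ys = [0]" using \<open>hd (rev ys) = 0\<close> ys(1)
      by (metis is_walk_def list.collapse rev_is_Nil_conv)
    then show ?thesis using True xs \<open>last (rev ys) = v\<close> by simp
  next
    case False
    then show ?thesis using \<open>last (rev ys) = v\<close> by (metis last_appendR last_tl)
  qed
  ultimately show "\<exists>vs. is_walk E vs \<and> hd vs = u \<and> last vs = v" by blast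
qed

lemma no_cycle: "\<not> has_cycle E"
proof
  assume "has_cycle E"
  then obtain vs where vs: "length vs \<ge> 3" "distinct vs" "is_walk E vs" "adj E (last vs) (hd vs)"
    unfolding has_cycle_def by blast
  define L where "L = length vs"
  have "finite (h ` set vs)" "h ` set vs \<noteq> {}" using vs by auto
  then have "Max (h ` set vs) \<in> h ` set vs" by (rule Max_in)
  then obtain x where x: "x \<in> set vs" "h x = Max (h ` set vs)" by auto
  then obtain i where i: "i < L" "vs ! i = x" unfolding L_def by (metis in_set_conv_nth)
  have mx: "\<And>j. j < L \<Longrightarrow> h (vs ! j) \<le> h x"
    using x unfolding L_def by (simp add: nth_mem)
  define nx where "nx = (if Suc i = L then 0 else Suc i)"
  define pv where "pv = (if i = 0 then L - 1 else i - 1)"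
  have nxL: "nx < L" "pv < L" using i vs(1) unfolding nx_def pv_def L_def by auto
  have a1: "adj E x (vs ! nx)" using walk_cyclic_adj[OF vs(3) vs(4), of i] i unfolding nx_def L_def by simp
  have "(if Suc pv = L then 0 else Suc pv) = i" unfolding pv_def using i by auto
  then have a2: "adj E x (vs ! pv)" using walk_cyclic_adj[OF vs(3) vs(4), of pv] nxL i(2)
    unfolding L_def by (simp add: adj_sym)
  have ne: "nx \<noteq> pv" using i vs(1) unfolding nx_def pv_def L_def by auto
  have "h (vs ! nx) < h x" using mx[OF nxL(1)] adj_h[OF a1] by auto
  then have e1: "vs ! nx = par x" using adj_down a1 by blast
  have "h (vs ! pv) < h x" using mx[OF nxL(2)] adj_h[OF a2] by auto
  then have e2: "vs ! pv = par x" using adj_down a2 by blast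
  have "vs ! nx \<noteq> vs ! pv" using vs(2) nxL ne unfolding L_def by (simp add: nth_eq_iff_index_eq)
  then show False using e1 e2 by simp
qed

lemma is_tree: "is_tree V E"
  unfolding is_tree_def using is_graph connected no_cycle by simp

end



lemma runidx_0[simp]: "runidx pi 0 = 0"
  unfolding runidx_def by simp

lemma runidx_Suc: "runidx pi (Suc i) = runidx pi i + (if asctop pi (Suc i) \<noteq> asctop pi i then 1 else 0)"
proof -
  let ?P = "\<lambda>j. asctop pi j \<noteq> asctop pi (j - 1)"
  have eq: "{j. 1 \<le> j \<and> j \<le> Suc i \<and> ?P j} = {j. 1 \<le> j \<and> j \<le> i \<and> ?P j} \<union> (if ?P (Suc i) then {Suc i} else {})"
    by (auto simp: le_Suc_eq)
  have fin: "finite {j. 1 \<le> j \<and> j \<le> i \<and> ?P j}" by (rule finite_subset[of _ "{..i}"]) auto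
  show ?thesis unfolding runidx_def eq using fin by (auto simp: card_insert_if)
qed

lemma asctop_even: "asctop pi t \<longleftrightarrow> even (runidx pi t)"
proof (induction t)
  case 0 then show ?case by (simp add: asctop_def)
next
  case (Suc t) then show ?case by (simp add: runidx_Suc)
qed

lemma runidx_mono: "i \<le> j \<Longrightarrow> runidx pi i \<le> runidx pi j"
proof (induction j)
  case 0 then show ?case by simp
next
  case (Suc j) then show ?case by (auto simp: runidx_Suc le_Suc_eq)
qed

lemma same_run:
  assumes "i < j" "j < length pi" "distinct pi" "runidx pi i = runidx pi j"
  shows "(even (runidx pi i) \<longrightarrow> pi ! i < pi ! j) \<and> (odd (runidx pi i) \<longrightarrow> pi ! j < pi ! i)"
  using assms
proof (induction j)
  case 0 then show ?case by simp
next
  case (Suc j)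
  have r: "runidx pi j = runidx pi i" using runidx_mono[of i j pi] runidx_mono[of j "Suc j" pi] Suc.prems by simp
  then have rs: "runidx pi (Suc j) = runidx pi j" using Suc.prems by simp
  then have a: "asctop pi (Suc j) = asctop pi j" using runidx_Suc[of pi j] by (auto split: if_splits)
  have step: "(even (runidx pi i) \<longrightarrow> pi ! j < pi ! Suc j) \<and> (odd (runidx pi i) \<longrightarrow> pi ! Suc j < pi ! j)"
  proof -
    have "pi ! j \<noteq> pi ! Suc j" using Suc.prems by (simp add: nth_eq_iff_index_eq)
    moreover have "asctop pi (Suc j) \<longleftrightarrow> pi ! j < pi ! Suc j" unfolding asctop_def by simp
    moreover have "asctop pi (Suc j) \<longleftrightarrow> even (runidx pi i)" using asctop_even[of pi "Suc j"] rs r by simp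
    ultimately show ?thesis by auto
  qed
  show ?case
  proof (cases "i = j")
    case True then show ?thesis using step by simp
  next
    case False
    then have "(even (runidx pi i) \<longrightarrow> pi ! i < pi ! j) \<and> (odd (runidx pi i) \<longrightarrow> pi ! j < pi ! i)"
      using Suc r by simp
    then show ?thesis using step by auto
  qed
qed

lemma pos_nth: "distinct pi \<Longrightarrow> i < length pi \<Longrightarrow> pos pi (pi ! i) = i"
  unfolding pos_def by (auto intro!: the_equality simp: nth_eq_iff_index_eq)

lemma pos_in: "distinct pi \<Longrightarrow> v \<in> set pi \<Longrightarrow> pos pi v < length pi \<and> pi ! pos pi v = v"
  by (metis in_set_conv_nth pos_nth)

lemma lvl_nth: "distinct pi \<Longrightarrow> i < length pi \<Longrightarrow> lvl pi (pi ! i) = Suc (runidx pi i)"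
  unfolding lvl_def by (simp add: pos_nth)

lemma blk_iff: "k \<noteq> 0 \<Longrightarrow> distinct pi \<Longrightarrow> v \<in> blk pi k \<longleftrightarrow> v \<in> set pi \<and> lvl pi v = k"
  unfolding blk_def
  by (auto simp: lvl_nth in_set_conv_nth; metis lvl_def pos_in)

lemma blk_sub: "blk pi k \<subseteq> insert 0 (set pi)"
  unfolding blk_def by auto

lemma blk_finite: "finite (blk pi k)"
  using blk_sub finite_subset by blast

lemma lvl_pos: "lvl pi v \<noteq> 0"
  unfolding lvl_def by simp

lemma perm_unique:
  assumes d: "distinct pi" "distinct pi'" and s: "set pi = set pi'"
    and l: "\<And>v. v \<in> set pi \<Longrightarrow> lvl pi v = lvl pi' v"
  shows "pi = pi'"
proof -
  have len: "length pi = length pi'" using d s by (metis distinct_card)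
  have "\<forall>j<i. pi ! j = pi' ! j" if "i \<le> length pi" for i
    using that
  proof (induction i)
    case 0 then show ?case by simp
  next
    case (Suc i)
    then have IH: "\<And>j. j < i \<Longrightarrow> pi ! j = pi' ! j" by simp
    have il: "i < length pi" using Suc.prems by simp
    have "pi ! i = pi' ! i"
    proof (rule ccontr)
      assume ne: "pi ! i \<noteq> pi' ! i"
      define x where "x = pi ! i"
      define y where "y = pi' ! i"
      have "y \<in> set pi" using s il len unfolding y_def by simp
      then obtain j where j: "j < length pi" "pi ! j = y" by (metis in_set_conv_nth)
      have "x \<in> set pi'" using s il len unfolding x_def by (metis nth_mem)
      then obtain j' where j': "j' < length pi'" "pi' ! j' = x" by (metis in_set_conv_nth)
      have "i < j"
      proof (rule ccontr)
        assume "\<not> i < j"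
        moreover have "j \<noteq> i" using j ne unfolding x_def y_def by auto
        ultimately have "j < i" by simp
        then have "pi' ! j = y" using IH j by simp
        then show False using \<open>j < i\<close> d(2) il len unfolding y_def by (simp add: nth_eq_iff_index_eq)
      qed
      have "i < j'"
      proof (rule ccontr)
        assume "\<not> i < j'"
        moreover have "j' \<noteq> i" using j' ne unfolding x_def y_def by auto
        ultimately have "j' < i" by simp
        then have "pi ! j' = x" using IH j' by simp
        then show False using \<open>j' < i\<close> d(1) il unfolding x_def by (simp add: nth_eq_iff_index_eq)
      qed
      have r1: "runidx pi i \<le> runidx pi j" using \<open>i < j\<close> runidx_mono by simp
      have r2: "runidx pi' i \<le> runidx pi' j'" using \<open>i < j'\<close> runidx_mono by simp
      have lx: "lvl pi x = Suc (runidx pi i)" "lvl pi y = Suc (runidx pi j)"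
        using lvl_nth[OF d(1)] il j unfolding x_def by auto
      have ly: "lvl pi' y = Suc (runidx pi' i)" "lvl pi' x = Suc (runidx pi' j')"
        using lvl_nth[OF d(2)] il j' len unfolding y_def by auto
      have "x \<in> set pi" "y \<in> set pi" using il j unfolding x_def by auto
      then have e: "runidx pi i = runidx pi j" "runidx pi' i = runidx pi' j'" "runidx pi i = runidx pi' i"
        using l lx ly r1 r2 by force+
      have A: "(even (runidx pi i) \<longrightarrow> x < y) \<and> (odd (runidx pi i) \<longrightarrow> y < x)"
        using same_run[OF \<open>i < j\<close> j(1) d(1) e(1)] j unfolding x_def by simp
      have B: "(even (runidx pi' i) \<longrightarrow> y < x) \<and> (odd (runidx pi' i) \<longrightarrow> x < y)"
        using same_run[OF \<open>i < j'\<close> j'(1) d(2) e(2)] j' unfolding y_def by simp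
      show False using A B e(3) by auto
    qed
    then show ?case using IH by (auto simp: less_Suc_eq)
  qed
  then have "\<forall>j<length pi. pi ! j = pi' ! j" by blast
  then show ?thesis using len by (simp add: nth_equalityI)
qed

lemma runidx_char:
  assumes g0: "g 0 = 1"
    and gs: "\<And>i. Suc i < length pi \<Longrightarrow> g (Suc i) = g i \<or> g (Suc i) = Suc (g i)"
    and ga: "\<And>i. i < length pi \<Longrightarrow> asctop pi i \<longleftrightarrow> odd (g i)"
  shows "i < length pi \<Longrightarrow> runidx pi i = g i - 1 \<and> g i \<noteq> 0"
proof (induction i)
  case 0 then show ?case using g0 by simp
next
  case (Suc i)
  then have IH: "runidx pi i = g i - 1" "g i \<noteq> 0" by auto
  have "asctop pi (Suc i) \<noteq> asctop pi i \<longleftrightarrow> g (Suc i) = Suc (g i)"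
    using ga[of i] ga[of "Suc i"] gs[of i] Suc.prems by auto
  then show ?case using gs[of i] Suc.prems IH by (auto simp: runidx_Suc)
qed



lemma card_less_nth:
  fixes S :: "nat set"
  assumes "finite S" "t < card S"
  shows "card {j \<in> S. j < sorted_list_of_set S ! t} = t"
proof -
  let ?s = "sorted_list_of_set S"
  have st: "sorted_wrt (<) ?s" "distinct ?s" "length ?s = card S" "set ?s = S"
    using assms by auto
  have "{j \<in> S. j < ?s ! t} = set (take t ?s)"
  proof
    show "{j \<in> S. j < ?s ! t} \<subseteq> set (take t ?s)"
    proof
      fix x assume x: "x \<in> {j \<in> S. j < ?s ! t}"
      then obtain u where u: "u < length ?s" "?s ! u = x" using st by (metis in_set_conv_nth mem_Collect_eq)
      have "u < t"
      proof (rule ccontr)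
        assume "\<not> u < t"
        then have "?s ! t \<le> ?s ! u" using u st(1) by (metis not_less sorted_nth_mono sorted_sorted_list_of_set)
        then show False using x u by auto
      qed
      then show "x \<in> set (take t ?s)" using u by (metis in_set_conv_nth length_take min_less_iff_conj nth_take)
    qed
  next
    show "set (take t ?s) \<subseteq> {j \<in> S. j < ?s ! t}"
    proof
      fix x assume "x \<in> set (take t ?s)"
      then obtain u where u: "u < t" "?s ! u = x" using assms st
        by (auto simp: in_set_conv_nth)
      then have "x < ?s ! t" using st assms sorted_wrt_nth_less[OF st(1), of u t] by simp
      moreover have "x \<in> S" using u st assms by (metis nth_mem order.strict_trans)
      ultimately show "x \<in> {j \<in> S. j < ?s ! t}" by simp
    qed
  qed
  then show ?thesis using st assms by (simp add: distinct_card)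
qed

lemma nth_card_less:
  fixes S :: "nat set"
  assumes "finite S" "x \<in> S"
  shows "sorted_list_of_set S ! card {j \<in> S. j < x} = x"
proof -
  obtain t where t: "t < length (sorted_list_of_set S)" "sorted_list_of_set S ! t = x"
    using assms by (metis in_set_conv_nth set_sorted_list_of_set)
  then have "t < card S" using assms by simp
  then show ?thesis using card_less_nth[OF assms(1)] t by metis
qed

lemma card_greater:
  fixes S :: "nat set"
  assumes "finite S" "x \<in> S"
  shows "card {j \<in> S. x < j} = card S - 1 - card {j \<in> S. j < x}"
proof -
  have S: "S = {j \<in> S. j < x} \<union> ({x} \<union> {j \<in> S. x < j})" using assms by auto
  have A: "card ({x} \<union> {j \<in> S. x < j}) = 1 + card {j \<in> S. x < j}"
    using assms by (subst card_Un_disjoint) auto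
  have B: "card ({j \<in> S. j < x} \<union> ({x} \<union> {j \<in> S. x < j})) = card {j \<in> S. j < x} + card ({x} \<union> {j \<in> S. x < j})"
    using assms by (intro card_Un_disjoint) auto
  have "card S = card {j \<in> S. j < x} + 1 + card {j \<in> S. x < j}"
    using A B S by simp
  then show ?thesis by simp
qed

lemma rev_nth_card_greater:
  fixes S :: "nat set"
  assumes "finite S" "x \<in> S"
  shows "rev (sorted_list_of_set S) ! card {j \<in> S. x < j} = x"
proof -
  have c: "card {j \<in> S. j < x} < card S"
    using assms by (intro psubset_card_mono) auto
  have "rev (sorted_list_of_set S) ! card {j \<in> S. x < j}
      = sorted_list_of_set S ! (card S - Suc (card S - 1 - card {j \<in> S. j < x}))"
    using card_greater[OF assms] c by (simp add: rev_nth)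
  also have "card S - Suc (card S - 1 - card {j \<in> S. j < x}) = card {j \<in> S. j < x}" using c by simp
  finally show ?thesis using nth_card_less[OF assms] by simp
qed

lemma sel_lt:
  fixes S :: "nat set"
  assumes "finite S" "d < card {j \<in> S. j < l}"
  shows "sorted_list_of_set S ! d \<in> S \<and> sorted_list_of_set S ! d < l"
proof -
  have "card {j \<in> S. j < l} \<le> card S" using assms by (intro card_mono) auto
  then have dS: "d < card S" using assms by simp
  then have "sorted_list_of_set S ! d \<in> S" using assms
    by (metis length_sorted_list_of_set nth_mem set_sorted_list_of_set)
  moreover have "sorted_list_of_set S ! d < l"
  proof (rule ccontr)
    assume "\<not> ?thesis"
    then have "{j \<in> S. j < l} \<subseteq> {j \<in> S. j < sorted_list_of_set S ! d}" by auto
    then have "card {j \<in> S. j < l} \<le> d" using card_mono card_less_nth[OF assms(1) dS] assms(1)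
      by (metis (no_types, lifting) finite_subset mem_Collect_eq subsetI)
    then show False using assms by simp
  qed
  ultimately show ?thesis by simp
qed

lemma sel_gt:
  fixes S :: "nat set"
  assumes "finite S" "d < card {j \<in> S. l < j}"
  shows "rev (sorted_list_of_set S) ! d \<in> S \<and> l < rev (sorted_list_of_set S) ! d"
proof -
  have "card {j \<in> S. l < j} \<le> card S" using assms by (intro card_mono) auto
  then have dS: "d < card S" using assms by simp
  define t where "t = card S - Suc d"
  have tS: "t < card S" using dS unfolding t_def by simp
  have eq: "rev (sorted_list_of_set S) ! d = sorted_list_of_set S ! t"
    using dS unfolding t_def by (simp add: rev_nth)
  have mem: "sorted_list_of_set S ! t \<in> S" using assms tS
    by (metis length_sorted_list_of_set nth_mem set_sorted_list_of_set)
  moreover have "l < sorted_list_of_set S ! t"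
  proof (rule ccontr)
    assume "\<not> ?thesis"
    then have "{j \<in> S. l < j} \<subseteq> {j \<in> S. sorted_list_of_set S ! t < j}" by auto
    then have "card {j \<in> S. l < j} \<le> card {j \<in> S. sorted_list_of_set S ! t < j}"
      using assms(1) by (intro card_mono) auto
    also have "\<dots> = card S - 1 - t" using card_greater[OF assms(1) mem] card_less_nth[OF assms(1) tS] by simp
    also have "\<dots> = d" using dS unfolding t_def by simp
    finally show False using assms by simp
  qed
  ultimately show ?thesis using eq by simp
qed



definition hP :: "nat list \<Rightarrow> nat \<Rightarrow> nat" where
  "hP pi v = (if v = 0 then 0 else lvl pi v)"

lemma canon_basic: "canonical_dp n pi a \<Longrightarrow> distinct pi \<and> set pi = {1..n} \<and> length a = n"
  unfolding canonical_dp_def decorated_perm_def by auto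

lemma parent_props:
  assumes c: "canonical_dp n pi a" and l: "l \<in> set pi"
  shows "parent pi a l \<in> blk pi (lvl pi l - 1) \<and> (odd (lvl pi l) \<longrightarrow> parent pi a l < l)
         \<and> (even (lvl pi l) \<longrightarrow> l < parent pi a l)"
proof -
  define k where "k = lvl pi l"
  define S where "S = blk pi (k - 1)"
  have fin: "finite S" unfolding S_def by (rule blk_finite)
  have m: "dec a l < mu pi l" using c l unfolding canonical_dp_def by auto
  show ?thesis
  proof (cases "odd k")
    case True
    then have "dec a l < card {j \<in> S. j < l}" using m unfolding mu_def k_def S_def Let_def by simp
    from sel_lt[OF fin this] True show ?thesis
      unfolding parent_def k_def S_def Let_def by (simp add: k_def)
  next
    case False
    then have "dec a l < card {j \<in> S. l < j}" using m unfolding mu_def k_def S_def Let_def by simp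
    from sel_gt[OF fin this] False show ?thesis
      unfolding parent_def k_def S_def Let_def by (simp add: k_def)
  qed
qed

lemma ptree_interp:
  assumes c: "canonical_dp n pi a"
  shows "ptree {0..n} (parent pi a) (hP pi) (tree_of pi a)"
proof
  have b: "distinct pi" "set pi = {1..n}" using canon_basic[OF c] by auto
  show "0 \<in> {0..n}" by simp
  show "hP pi 0 = 0" unfolding hP_def by simp
  show "tree_of pi a = {{v, parent pi a v} |v. v \<in> {0..n} \<and> v \<noteq> 0}"
    unfolding tree_of_def using b by auto
  fix v assume v: "v \<in> {0..n}" "v \<noteq> 0"
  then have vs: "v \<in> set pi" using b by auto
  have pb: "parent pi a v \<in> blk pi (lvl pi v - 1)" using parent_props[OF c vs] by simp
  show "parent pi a v \<in> {0..n} \<and> Suc (hP pi (parent pi a v)) = hP pi v"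
  proof (cases "lvl pi v = 1")
    case True
    then have "parent pi a v = 0" using pb unfolding blk_def by simp
    then show ?thesis using True v unfolding hP_def by simp
  next
    case False
    then have ne: "lvl pi v - 1 \<noteq> 0" using lvl_pos[of pi v] by simp
    then have "parent pi a v \<in> set pi" "lvl pi (parent pi a v) = lvl pi v - 1"
      using blk_iff[OF ne b(1)] pb by auto
    moreover then have "parent pi a v \<noteq> 0" using b by auto
    ultimately show ?thesis using v ne b unfolding hP_def by auto
  qed
qed

lemma part1:
  assumes c: "canonical_dp n pi a"
  shows "intransitive_tree {0..n} (tree_of pi a) \<and>
            (\<forall>k. {v \<in> {0..n}. depth (tree_of pi a) v = k} = blk pi k)"
proof -
  interpret T: ptree "{0..n}" "parent pi a" "hP pi" "tree_of pi a" by (rule ptree_interp[OF c])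
  have b: "distinct pi" "set pi = {1..n}" using canon_basic[OF c] by auto
  have ord: "\<And>l. l \<in> {0..n} \<Longrightarrow> l \<noteq> 0 \<Longrightarrow> (odd (hP pi l) \<longrightarrow> parent pi a l < l) \<and> (even (hP pi l) \<longrightarrow> l < parent pi a l)"
  proof -
    fix l assume "l \<in> {0..n}" "l \<noteq> 0"
    then have "l \<in> set pi" using b by auto
    then show "(odd (hP pi l) \<longrightarrow> parent pi a l < l) \<and> (even (hP pi l) \<longrightarrow> l < parent pi a l)"
      using parent_props[OF c] \<open>l \<noteq> 0\<close> unfolding hP_def by simp
  qed
  have intr: "\<forall>v\<in>{0..n}. (\<forall>w. adj (tree_of pi a) v w \<longrightarrow> v < w) \<or> (\<forall>w. adj (tree_of pi a) v w \<longrightarrow> w < v)"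
  proof
    fix v assume v: "v \<in> {0..n}"
    show "(\<forall>w. adj (tree_of pi a) v w \<longrightarrow> v < w) \<or> (\<forall>w. adj (tree_of pi a) v w \<longrightarrow> w < v)"
    proof (cases "even (hP pi v)")
      case True
      have "\<forall>w. adj (tree_of pi a) v w \<longrightarrow> v < w"
      proof (intro allI impI)
        fix w assume "adj (tree_of pi a) v w"
        then consider "v \<in> {0..n}" "v \<noteq> 0" "w = parent pi a v" | "w \<in> {0..n}" "w \<noteq> 0" "v = parent pi a w"
          using T.adj_iff by blast
        then show "v < w"
        proof cases
          case 1 then show ?thesis using ord True by blast
        next
          case 2
          then have "odd (hP pi w)" using T.parV True by (metis even_Suc)
          then show ?thesis using ord 2 by blast
        qed
      qed
      then show ?thesis by simp
    next
      case False
      have "\<forall>w. adj (tree_of pi a) v w \<longrightarrow> w < v"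
      proof (intro allI impI)
        fix w assume "adj (tree_of pi a) v w"
        then consider "v \<in> {0..n}" "v \<noteq> 0" "w = parent pi a v" | "w \<in> {0..n}" "w \<noteq> 0" "v = parent pi a w"
          using T.adj_iff by blast
        then show "w < v"
        proof cases
          case 1 then show ?thesis using ord False by blast
        next
          case 2
          then have "even (hP pi w)" using T.parV False by (metis even_Suc)
          then show ?thesis using ord 2 by blast
        qed
      qed
      then show ?thesis by simp
    qed
  qed
  have dep: "{v \<in> {0..n}. depth (tree_of pi a) v = k} = blk pi k" for k
  proof -
    have "{v \<in> {0..n}. depth (tree_of pi a) v = k} = {v \<in> {0..n}. hP pi v = k}"
      using T.depth_eq by auto
    also have "\<dots> = blk pi k"
    proof (cases "k = 0")
      case True
      then show ?thesis unfolding hP_def blk_def by (auto simp: lvl_def)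
    next
      case False
      then show ?thesis using blk_iff[OF False b(1)] b unfolding hP_def by auto
    qed
    finally show ?thesis .
  qed
  show ?thesis using T.is_tree intr dep unfolding intransitive_tree_def by blast
qed



lemma mu_le_card: "mu pi l \<le> card (blk pi (lvl pi l - 1))"
  unfolding mu_def Let_def using blk_finite by (auto intro!: card_mono)

lemma dec_from_parent:
  assumes c: "canonical_dp n pi a" and c': "canonical_dp n pi a'" and l: "l \<in> set pi"
    and e: "parent pi a l = parent pi a' l"
  shows "dec a l = dec a' l"
proof -
  define S where "S = blk pi (lvl pi l - 1)"
  define s where "s = sorted_list_of_set S"
  have fin: "finite S" unfolding S_def by (rule blk_finite)
  have "dec a l < mu pi l" "dec a' l < mu pi l" using c c' l unfolding canonical_dp_def by auto
  then have d: "dec a l < length s" "dec a' l < length s" using mu_le_card[of pi l] fin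
    unfolding s_def S_def by auto
  have ds: "distinct s" "distinct (rev s)" unfolding s_def by auto
  show ?thesis
  proof (cases "odd (lvl pi l)")
    case True
    then have "s ! dec a l = s ! dec a' l" using e unfolding parent_def Let_def s_def S_def by simp
    then show ?thesis using ds d by (simp add: nth_eq_iff_index_eq)
  next
    case False
    then have "rev s ! dec a l = rev s ! dec a' l" using e unfolding parent_def Let_def s_def S_def by simp
    then show ?thesis using ds d by (simp add: nth_eq_iff_index_eq)
  qed
qed

lemma inj_part:
  assumes c: "canonical_dp n pi a" and c': "canonical_dp n pi' a'"
    and eq: "tree_of pi a = tree_of pi' a'"
  shows "pi = pi' \<and> a = a'"
proof -
  interpret T: ptree "{0..n}" "parent pi a" "hP pi" "tree_of pi a" by (rule ptree_interp[OF c])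
  interpret T': ptree "{0..n}" "parent pi' a'" "hP pi'" "tree_of pi' a'" by (rule ptree_interp[OF c'])
  have b: "distinct pi" "set pi = {1..n}" "length a = n" using canon_basic[OF c] by auto
  have b': "distinct pi'" "set pi' = {1..n}" "length a' = n" using canon_basic[OF c'] by auto
  have "lvl pi v = lvl pi' v" if v: "v \<in> set pi" for v
  proof -
    have "v \<in> {0..n}" "v \<noteq> 0" using v b by auto
    then have "hP pi v = hP pi' v" using T.depth_eq T'.depth_eq eq by metis
    then show ?thesis using \<open>v \<noteq> 0\<close> unfolding hP_def by simp
  qed
  then have pp: "pi = pi'" using perm_unique b b' by metis
  have "dec a l = dec a' l" if l: "l \<in> {1..n}" for l
  proof -
    have lV: "l \<in> {0..n}" "l \<noteq> 0" using l by auto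
    have "{l, parent pi' a' l} \<in> tree_of pi' a'" unfolding tree_of_def using l b' by auto
    then have ad: "adj (tree_of pi a) l (parent pi' a' l)" unfolding adj_def using eq by simp
    have "Suc (hP pi' (parent pi' a' l)) = hP pi' l" using T'.parV lV by blast
    then have "hP pi (parent pi a' l) < hP pi l" using pp by simp
    then have "parent pi a' l = parent pi a l" using T.adj_down ad pp by simp
    then show ?thesis using dec_from_parent[OF c, of a' l] c' pp l b by simp
  qed
  then have "\<forall>i<n. a ! i = a' ! i" unfolding dec_def
    by (metis Suc_eq_plus1 add_diff_cancel_right' atLeastAtMost_iff le_add2 less_Suc_eq_le
       Suc_le_eq)
  then have "a = a'" using b b' by (simp add: nth_equalityI)
  then show ?thesis using pp by simp
qed



locale itree =
  fixes n :: nat and E :: "nat set set"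
  assumes n1: "n \<ge> 1" and it: "intransitive_tree {0..n} E"
begin

abbreviation "V \<equiv> {0..n}"
abbreviation "h \<equiv> depth E"

lemma tree: "is_graph V E" "connected_graph V E" "\<not> has_cycle E"
  and intr: "\<And>v. v \<in> V \<Longrightarrow> (\<forall>w. adj E v w \<longrightarrow> v < w) \<or> (\<forall>w. adj E v w \<longrightarrow> w < v)"
  using it unfolding intransitive_tree_def is_tree_def by auto

lemma gr: "adj E u v \<Longrightarrow> u \<in> V \<and> v \<in> V \<and> u \<noteq> v"
proof -
  assume "adj E u v"
  then have "{u, v} \<in> E" unfolding adj_def .
  then obtain x y where "{u, v} = {x, y}" "x \<in> V" "y \<in> V" "x \<noteq> y"
    using tree(1) unfolding is_graph_def by blast
  then show ?thesis by (auto simp: doubleton_eq_iff)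
qed

lemma hwalk: "v \<in> V \<Longrightarrow> \<exists>vs. is_walk E vs \<and> length vs = Suc (h v) \<and> hd vs = 0 \<and> last vs = v"
proof -
  assume v: "v \<in> V"
  have "0 \<in> V" by simp
  then obtain vs where vs: "is_walk E vs" "hd vs = 0" "last vs = v"
    using tree(2) v unfolding connected_graph_def by blast
  then have "\<exists>k vs. is_walk E vs \<and> length vs = Suc k \<and> hd vs = 0 \<and> last vs = v"
  proof -
    have "vs \<noteq> []" using vs(1) unfolding is_walk_def by simp
    then have "length vs = Suc (length vs - 1)" by simp
    then show ?thesis using vs by blast
  qed
  then show ?thesis unfolding depth_def by (rule LeastI_ex)
qed

lemma hmin: "is_walk E vs \<Longrightarrow> hd vs = 0 \<Longrightarrow> last vs = v \<Longrightarrow> h v \<le> length vs - 1"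
proof -
  assume a: "is_walk E vs" "hd vs = 0" "last vs = v"
  then have "vs \<noteq> []" unfolding is_walk_def by simp
  then have "length vs = Suc (length vs - 1)" by simp
  then show ?thesis unfolding depth_def using a by (intro Least_le) blast
qed

lemma h_zero: "v \<in> V \<Longrightarrow> h v = 0 \<longleftrightarrow> v = 0"
proof
  assume "v \<in> V" "h v = 0"
  then obtain vs where "is_walk E vs" "length vs = 1" "hd vs = 0" "last vs = v" using hwalk by fastforce
  then show "v = 0" by (metis One_nat_def last_ConsL length_0_conv length_Suc_conv list.sel(1))
next
  assume "v = 0"
  then show "h v = 0" using hmin[of "[0]" 0] by simp
qed

lemma h_adj_le: "adj E u v \<Longrightarrow> h v \<le> Suc (h u)"
proof -
  assume a: "adj E u v"
  then have "u \<in> V" using gr by blast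
  then obtain vs where vs: "is_walk E vs" "length vs = Suc (h u)" "hd vs = 0" "last vs = u" using hwalk by blast
  then have "is_walk E (vs @ [v])" using a is_walk_snoc by simp
  moreover have "vs \<noteq> []" using vs by auto
  ultimately have "h v \<le> length (vs @ [v]) - 1" using hmin[of "vs @ [v]" v] vs by simp
  then show ?thesis using vs by simp
qed

definition lo :: "nat \<Rightarrow> bool" where "lo v = (\<exists>w. adj E v w \<and> w < v)"

lemma lo_adj: "adj E u v \<Longrightarrow> lo u \<noteq> lo v"
proof -
  have main: "lo v \<and> \<not> lo u" if a: "adj E u v" and uv: "u < v" for u v
  proof
    show "lo v" using a uv unfolding lo_def by (metis adj_sym)
    have "u \<in> V" using gr a by blast
    then have "\<forall>w. adj E u w \<longrightarrow> u < w" using intr a uv by (metis not_less_iff_gr_or_eq)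
    then show "\<not> lo u" unfolding lo_def by auto
  qed
  assume a: "adj E u v"
  then have "u \<noteq> v" using gr by blast
  then consider "u < v" | "v < u" by linarith
  then show ?thesis
  proof cases
    case 1 then show ?thesis using main[OF a] by blast
  next
    case 2
    have "adj E v u" using a adj_sym by metis
    then show ?thesis using main[OF _ 2] by blast
  qed
qed

lemma lo_0: "\<not> lo 0" unfolding lo_def by simp

lemma lo_walk: "is_walk E vs \<Longrightarrow> lo (last vs) = (lo (hd vs) \<noteq> odd (length vs - 1))"
proof (induction vs)
  case Nil then show ?case by (simp add: is_walk_def)
next
  case (Cons x ws)
  show ?case
  proof (cases "ws = []")
    case True then show ?thesis by simp
  next
    case False
    then have "is_walk E ws" "adj E x (hd ws)" using Cons.prems is_walk_Cons by auto
    then have "lo (last ws) = (lo (hd ws) \<noteq> odd (length ws - 1))" "lo x \<noteq> lo (hd ws)"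
      using Cons.IH lo_adj by auto
    then show ?thesis using False by (cases ws) auto
  qed
qed

lemma lo_h: "v \<in> V \<Longrightarrow> lo v \<longleftrightarrow> odd (h v)"
proof -
  assume "v \<in> V"
  then obtain vs where "is_walk E vs" "length vs = Suc (h v)" "hd vs = 0" "last vs = v" using hwalk by blast
  then show ?thesis using lo_walk lo_0 by fastforce
qed

lemma h_adj: "adj E u v \<Longrightarrow> h v = Suc (h u) \<or> h u = Suc (h v)"
proof -
  assume a: "adj E u v"
  then have "h v \<le> Suc (h u)" "h u \<le> Suc (h v)" using h_adj_le adj_sym by metis+
  moreover have "lo u \<noteq> lo v" "u \<in> V" "v \<in> V" using lo_adj a gr by auto
  then have "h u \<noteq> h v" using lo_h by metis
  ultimately show ?thesis by linarith
qed

lemma lo_order: "adj E u v \<Longrightarrow> (lo v \<longrightarrow> u < v) \<and> (\<not> lo v \<longrightarrow> v < u)"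
proof -
  assume a: "adj E u v"
  then have uv: "u \<noteq> v" "v \<in> V" using gr by auto
  show ?thesis
  proof (intro conjI impI)
    assume "lo v"
    then obtain w where "adj E v w" "w < v" unfolding lo_def by blast
    then have "\<forall>w. adj E v w \<longrightarrow> w < v" using intr[OF uv(2)] by auto
    then show "u < v" using a adj_sym by metis
  next
    assume "\<not> lo v"
    then show "v < u" using a uv unfolding lo_def by (metis adj_sym linorder_neqE_nat)
  qed
qed

lemma par_ex: "v \<in> V \<Longrightarrow> v \<noteq> 0 \<Longrightarrow> \<exists>u. adj E v u \<and> Suc (h u) = h v"
proof -
  assume v: "v \<in> V" "v \<noteq> 0"
  then have hv: "h v \<noteq> 0" using h_zero by blast
  obtain vs where vs: "is_walk E vs" "length vs = Suc (h v)" "hd vs = 0" "last vs = v" using hwalk v by blast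
  define u where "u = vs ! (h v - 1)"
  have "Suc (h v - 1) < length vs" using vs hv by simp
  then have "adj E u (vs ! Suc (h v - 1))" using vs(1) unfolding is_walk_def u_def by blast
  moreover have "vs ! Suc (h v - 1) = v"
  proof -
    have "vs \<noteq> []" using vs by auto
    then have "last vs = vs ! (length vs - 1)" by (rule last_conv_nth)
    then show ?thesis using vs hv by simp
  qed
  ultimately have a: "adj E v u" using adj_sym by metis
  have "is_walk E (take (h v) vs)" using is_walk_take vs hv by blast
  moreover have "hd (take (h v) vs) = 0" using vs hv by simp
  moreover have "last (take (h v) vs) = u"
  proof -
    have "take (h v) vs \<noteq> []" using vs(2) hv by (cases vs) auto
    then have "last (take (h v) vs) = take (h v) vs ! (length (take (h v) vs) - 1)" by (rule last_conv_nth)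
    then show ?thesis using vs hv unfolding u_def by simp
  qed
  ultimately have "h u \<le> h v - 1" using hmin[of "take (h v) vs" u] vs by simp
  then have "Suc (h u) = h v" using h_adj[OF a] hv by auto
  then show ?thesis using a by blast
qed

definition p :: "nat \<Rightarrow> nat" where "p v = (SOME u. adj E v u \<and> Suc (h u) = h v)"

lemma p_props: "v \<in> V \<Longrightarrow> v \<noteq> 0 \<Longrightarrow> adj E v (p v) \<and> Suc (h (p v)) = h v \<and> p v \<in> V"
proof -
  assume "v \<in> V" "v \<noteq> 0"
  then have ex: "\<exists>u. adj E v u \<and> Suc (h u) = h v" using par_ex by blast
  have "adj E v (p v) \<and> Suc (h (p v)) = h v" unfolding p_def by (rule someI_ex[OF ex])
  then show ?thesis using gr by blast
qed

lemma p_order: "v \<in> V \<Longrightarrow> v \<noteq> 0 \<Longrightarrow> (odd (h v) \<longrightarrow> p v < v) \<and> (even (h v) \<longrightarrow> v < p v)"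
proof -
  assume v: "v \<in> V" "v \<noteq> 0"
  then have "adj E (p v) v" using p_props adj_sym by metis
  then show ?thesis using lo_order[of "p v" v] lo_h[OF v(1)] by blast
qed

lemma chain: "v \<in> V \<Longrightarrow> i \<le> h v \<Longrightarrow> (p ^^ i) v \<in> V \<and> h ((p ^^ i) v) = h v - i"
proof (induction i)
  case 0 then show ?case by simp
next
  case (Suc i)
  then have IH: "(p ^^ i) v \<in> V" "h ((p ^^ i) v) = h v - i" by auto
  have ne: "(p ^^ i) v \<noteq> 0"
  proof
    assume "(p ^^ i) v = 0"
    then have "h ((p ^^ i) v) = 0" using h_zero by simp
    then show False using IH Suc.prems by simp
  qed
  have "p ((p ^^ i) v) \<in> V \<and> Suc (h (p ((p ^^ i) v))) = h ((p ^^ i) v)"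
    using p_props[OF IH(1) ne] by blast
  then have "Suc (h (p ((p ^^ i) v))) = h v - i" "p ((p ^^ i) v) \<in> V" using IH by auto
  then show ?case using Suc.prems by auto
qed

end



context itree begin

lemma p_unique:
  assumes a: "adj E y x" and hx: "Suc (h x) = h y"
  shows "x = p y"
proof (rule ccontr)
  assume ne: "x \<noteq> p y"
  have yV: "y \<in> V" and xV: "x \<in> V" using gr a by auto
  have y0: "y \<noteq> 0" using hx h_zero yV by force
  have py: "adj E y (p y)" "Suc (h (p y)) = h y" "p y \<in> V" using p_props[OF yV y0] by auto
  define d where "d = h x"
  have hpy: "h (p y) = d" using py hx unfolding d_def by simp
  define c where "c i = (p ^^ i) x" for i
  define c' where "c' i = (p ^^ i) (p y)" for i
  have cV: "c i \<in> V \<and> h (c i) = d - i" if "i \<le> d" for i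
    using chain[OF xV, of i] that unfolding c_def d_def by simp
  have cV': "c' i \<in> V \<and> h (c' i) = d - i" if "i \<le> d" for i
    using chain[OF py(3), of i] that hpy unfolding c'_def by simp
  have ex: "c d = c' d" using cV[of d] cV'[of d] h_zero by auto
  define i0 where "i0 = (LEAST i. c i = c' i)"
  have i0: "c i0 = c' i0" "i0 \<le> d" unfolding i0_def using ex by (auto intro: LeastI Least_le)
  have lt: "\<And>i. i < i0 \<Longrightarrow> c i \<noteq> c' i" unfolding i0_def using not_less_Least by blast
  have i01: "i0 \<ge> 1" using i0 ne unfolding c_def c'_def by (cases i0) auto
  define f where "f j = (if j = 0 then y else if j \<le> i0 then c (j - 1) else c' (2 * i0 + 1 - j))" for j
  define L where "L = 2 * i0 + 2"
  define vs where "vs = map f [0..<L]"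
  have hf: "h (f j) = (if j = 0 then Suc d else if j \<le> i0 then d - (j - 1) else d - (2 * i0 + 1 - j))"
    if "j < L" for j
    using that cV cV' i0 hx unfolding f_def L_def d_def by auto
  have fV: "f j \<in> V" if "j < L" for j
    using that cV cV' i0 yV unfolding f_def L_def by auto
  have padj: "adj E (z) (p z)" if "z \<in> V" "h z \<noteq> 0" for z
    using p_props that h_zero by fastforce
  have cS: "c (Suc i) = p (c i)" "c' (Suc i) = p (c' i)" for i unfolding c_def c'_def by auto
  have fadj: "adj E (f j) (f (Suc j))" if "Suc j < L" for j
  proof -
    consider "j = 0" | "1 \<le> j" "j < i0" | "j = i0" | "i0 < j" by linarith
    then show ?thesis
    proof cases
      case 1
      then show ?thesis using a i01 unfolding f_def c_def by simp
    next
      case 2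
      have e: "Suc (j - 1) = j" using 2 by simp
      have "f j = c (j - 1)" "f (Suc j) = c (Suc (j - 1))" unfolding f_def using 2 e by auto
      then have "f j = c (j - 1)" "f (Suc j) = p (c (j - 1))" using cS(1)[of "j - 1"] by auto
      moreover have "c (j - 1) \<in> V" "h (c (j - 1)) \<noteq> 0" using cV[of "j - 1"] 2 i0 by auto
      ultimately show ?thesis using padj by simp
    next
      case 3
      have e: "Suc (i0 - 1) = i0" using i01 by simp
      have "f j = c (i0 - 1)" "f (Suc j) = c' i0" unfolding f_def using 3 i01 by auto
      then have "f j = c (i0 - 1)" "f (Suc j) = p (c (i0 - 1))" using cS(1)[of "i0 - 1"] e i0(1) by auto
      moreover have "c (i0 - 1) \<in> V" "h (c (i0 - 1)) \<noteq> 0" using cV[of "i0 - 1"] i01 i0 by auto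
      ultimately show ?thesis using padj by simp
    next
      case 4
      define t where "t = 2 * i0 - j"
      have tl: "t < i0" using 4 that unfolding t_def L_def by simp
      have "f j = p (c' t)" "f (Suc j) = c' t" unfolding f_def t_def using 4 cS that L_def
        by (auto simp: Suc_diff_le)
      moreover have "c' t \<in> V" "h (c' t) \<noteq> 0" using cV'[of t] tl i0 by auto
      ultimately show ?thesis using padj adj_sym by metis
    qed
  qed
  have len: "length vs = L" "L \<ge> 3" unfolding vs_def L_def using i01 by auto
  have walk: "is_walk E vs" unfolding is_walk_def using fadj len unfolding vs_def by auto
  have hdl: "hd vs = y" "last vs = p y" unfolding vs_def L_def f_def c'_def
    by (auto simp: hd_map last_map)
  have cl: "adj E (last vs) (hd vs)" using hdl py adj_sym by metis
  have dist: "distinct vs" unfolding vs_def distinct_map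
  proof
    show "inj_on f (set [0..<L])"
    proof (rule inj_onI)
      fix j j' assume jj: "j \<in> set [0..<L]" "j' \<in> set [0..<L]" "f j = f j'"
      then have jl: "j < L" "j' < L" by auto
      have hh: "h (f j) = h (f j')" using jj by simp
      show "j = j'"
      proof (rule ccontr)
        assume jne: "j \<noteq> j'"
        have key: "False" if "j < L" "j' < L" "f j = f j'" "j \<noteq> j'" "j \<le> j'" for j j'
        proof -
          have hh: "h (f j) = h (f j')" using that by simp
          consider "j = 0" | "1 \<le> j" "j' \<le> i0" | "1 \<le> j" "j \<le> i0" "i0 < j'" | "i0 < j"
            by linarith
          then show False
          proof cases
            case 1 then show ?thesis using hh hf that by (auto split: if_splits)
          next
            case 2
            have "h (f j) = d - (j - 1)" "h (f j') = d - (j' - 1)" using hf[OF that(1)] hf[OF that(2)] 2 that(5) by auto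
            then show ?thesis using hh that 2 i0 by arith
          next
            case 3
            have "h (f j) = d - (j - 1)" "h (f j') = d - (2 * i0 + 1 - j')" using hf[OF that(1)] hf[OF that(2)] 3 that(5) by auto
            then have "j - 1 = 2 * i0 + 1 - j'" using hh that i0 3 unfolding L_def by arith
            moreover have "f j = c (j - 1)" "f j' = c' (2 * i0 + 1 - j')" using 3 unfolding f_def by auto
            moreover have "j - 1 < i0" using 3 by simp
            ultimately show False using lt[of "j - 1"] that(3) by simp
          next
            case 4
            have "h (f j) = d - (2 * i0 + 1 - j)" "h (f j') = d - (2 * i0 + 1 - j')" using hf[OF that(1)] hf[OF that(2)] 4 that(5) by auto
            then show ?thesis using hh that 4 i0 unfolding L_def by arith
          qed
        qed
        show False
        proof (cases "j \<le> j'")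
          case True then show ?thesis using key jl jj jne by blast
        next
          case False then show ?thesis using key[of j' j] jl jj jne by auto
        qed
      qed
    qed
  next
    show "distinct [0..<L]" by simp
  qed
  have "has_cycle E" unfolding has_cycle_def using len walk dist cl by blast
  then show False using tree by blast
qed

end



lemma mu_le_sb: "mu pi l \<le> stable_bound pi l"
proof -
  define k where "k = lvl pi l"
  have k0: "k \<noteq> 0" unfolding k_def by (rule lvl_pos)
  have fin: "finite (\<Union>{blk pi m | m. m < k \<and> P m})" for P
  proof (rule finite_subset[of _ "insert 0 (set pi)"])
    show "\<Union>{blk pi m | m. m < k \<and> P m} \<subseteq> insert 0 (set pi)" using blk_sub by blast
  qed simp
  show ?thesis
  proof (cases "odd k")
    case True
    have "{j \<in> blk pi (k - 1). j < l} \<subseteq> {j \<in> \<Union>{blk pi m | m. m < k \<and> even m}. j < l}"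
    proof -
      have "blk pi (k - 1) \<in> {blk pi m | m. m < k \<and> even m}" using True k0 by auto
      then show ?thesis by blast
    qed
    moreover have "finite {j \<in> \<Union>{blk pi m | m. m < k \<and> even m}. j < l}"
      using fin[of "\<lambda>m. even m"] by simp
    ultimately have "card {j \<in> blk pi (k - 1). j < l} \<le> card {j \<in> \<Union>{blk pi m | m. m < k \<and> even m}. j < l}"
      by (intro card_mono)
    then show ?thesis unfolding mu_def stable_bound_def Let_def k_def[symmetric] using True by simp
  next
    case False
    have "{j \<in> blk pi (k - 1). l < j} \<subseteq> {j \<in> \<Union>{blk pi m | m. m < k \<and> odd m}. l < j}"
    proof -
      have "blk pi (k - 1) \<in> {blk pi m | m. m < k \<and> odd m}" using False k0 by auto
      then show ?thesis by blast
    qed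
    moreover have "finite {j \<in> \<Union>{blk pi m | m. m < k \<and> odd m}. l < j}"
      by (rule finite_subset[OF _ fin[of "\<lambda>m. odd m"]]) auto
    ultimately have "card {j \<in> blk pi (k - 1). l < j} \<le> card {j \<in> \<Union>{blk pi m | m. m < k \<and> odd m}. l < j}"
      by (intro card_mono)
    then show ?thesis unfolding mu_def stable_bound_def Let_def k_def[symmetric] using False by simp
  qed
qed

context itree begin

definition S :: "nat \<Rightarrow> nat set" where "S k = {v \<in> V. h v = k}"
definition K :: "nat \<Rightarrow> nat \<times> nat" where "K v = (h v, if odd (h v) then v else n - v)"
definition pis :: "nat list" where "pis = sort_key K [1..<Suc n]"

lemma pis_basic: "set pis = {1..n}" "distinct pis" "length pis = n" "sorted (map K pis)"
  unfolding pis_def by auto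

lemma K_inj: "v \<in> V \<Longrightarrow> w \<in> V \<Longrightarrow> K v = K w \<Longrightarrow> v = w"
  unfolding K_def by (auto split: if_splits)

lemma K_le: "i \<le> j \<Longrightarrow> j < n \<Longrightarrow> K (pis ! i) \<le> K (pis ! j)"
  using sorted_nth_mono[OF pis_basic(4), of i j] pis_basic(3) by simp

lemma K_strict: "i < j \<Longrightarrow> j < n \<Longrightarrow> K (pis ! i) < K (pis ! j)"
proof -
  assume ij: "i < j" "j < n"
  have "pis ! i \<noteq> pis ! j" using ij pis_basic by (simp add: nth_eq_iff_index_eq)
  moreover have "pis ! i \<in> V" "pis ! j \<in> V" using ij pis_basic nth_mem
    by (metis atLeastAtMost_iff le0 less_trans)+
  ultimately have "K (pis ! i) \<noteq> K (pis ! j)" using K_inj by blast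
  then show ?thesis using K_le[of i j] ij by simp
qed

lemma K_rev: "i < n \<Longrightarrow> j < n \<Longrightarrow> K (pis ! i) < K (pis ! j) \<Longrightarrow> i < j"
  using K_le[of j i] by (meson leD linorder_not_less)

lemma mem_pis: "v \<in> V \<Longrightarrow> v \<noteq> 0 \<Longrightarrow> \<exists>j<n. pis ! j = v"
proof -
  assume "v \<in> V" "v \<noteq> 0"
  then have "v \<in> set pis" using pis_basic by auto
  then show ?thesis using pis_basic(3) by (metis in_set_conv_nth)
qed

lemma pis_V: "i < n \<Longrightarrow> pis ! i \<in> V \<and> pis ! i \<noteq> 0"
  using pis_basic nth_mem by (metis atLeastAtMost_iff le0 not_one_le_zero)

lemma level_ex: "v \<in> V \<Longrightarrow> 1 \<le> k \<Longrightarrow> k \<le> h v \<Longrightarrow> \<exists>z\<in>V. z \<noteq> 0 \<and> h z = k"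
proof -
  assume a: "v \<in> V" "1 \<le> k" "k \<le> h v"
  then have "(p ^^ (h v - k)) v \<in> V \<and> h ((p ^^ (h v - k)) v) = k" using chain[of v "h v - k"] by auto
  moreover then have "(p ^^ (h v - k)) v \<noteq> 0" using a h_zero by fastforce
  ultimately show ?thesis by blast
qed

lemma hpos: "i < n \<Longrightarrow> h (pis ! i) \<ge> 1"
  using pis_V h_zero by (metis less_one not_le)

lemma g0: "h (pis ! 0) = 1"
proof -
  have "1 \<in> V" "(1::nat) \<noteq> 0" using n1 by auto
  then have "h 1 \<ge> 1" using h_zero by (metis less_one not_le)
  then obtain z where z: "z \<in> V" "z \<noteq> 0" "h z = 1" using level_ex[OF \<open>1 \<in> V\<close>, of 1] by auto
  then obtain j where j: "j < n" "pis ! j = z" using mem_pis by blast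
  then have "K (pis ! 0) \<le> K z" using K_le[of 0 j] by simp
  then have "h (pis ! 0) \<le> 1" using z unfolding K_def by auto
  then show ?thesis using hpos[of 0] j by simp
qed

lemma gs: "Suc i < n \<Longrightarrow> h (pis ! Suc i) = h (pis ! i) \<or> h (pis ! Suc i) = Suc (h (pis ! i))"
proof -
  assume i: "Suc i < n"
  have "K (pis ! i) < K (pis ! Suc i)" using K_strict i by simp
  then have le: "h (pis ! i) \<le> h (pis ! Suc i)" unfolding K_def by auto
  show ?thesis
  proof (rule ccontr)
    assume "\<not> ?thesis"
    then have lt: "Suc (h (pis ! i)) < h (pis ! Suc i)" using le by auto
    obtain z where z: "z \<in> V" "z \<noteq> 0" "h z = Suc (h (pis ! i))"
      using level_ex[of "pis ! Suc i" "Suc (h (pis ! i))"] pis_V[OF i] lt by auto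
    then obtain j where j: "j < n" "pis ! j = z" using mem_pis by blast
    have "K (pis ! i) < K (pis ! j)" using z j unfolding K_def by auto
    then have "i < j" using K_rev i j by simp
    have "K (pis ! j) < K (pis ! Suc i)" using z j lt unfolding K_def by auto
    then have "j < Suc i" using K_rev i j by simp
    then show False using \<open>i < j\<close> by simp
  qed
qed

lemma ga: "i < n \<Longrightarrow> asctop pis i \<longleftrightarrow> odd (h (pis ! i))"
proof (cases i)
  case 0 then show "asctop pis i \<longleftrightarrow> odd (h (pis ! i))" using g0 unfolding asctop_def by simp
next
  case (Suc i')
  assume i: "i < n"
  define x where "x = pis ! i'"
  define y where "y = pis ! i"
  have as: "asctop pis i \<longleftrightarrow> x < y" unfolding asctop_def x_def y_def using Suc by simp
  have xV: "x \<in> V" "x \<noteq> 0" using pis_V i Suc unfolding x_def by auto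
  have yV: "y \<in> V" "y \<noteq> 0" using pis_V i unfolding y_def by auto
  have Kxy: "K x < K y" using K_strict[of i' i] i Suc unfolding x_def y_def by simp
  have xy: "x \<noteq> y" using Kxy by auto
  consider "h y = h x" | "h y = Suc (h x)" using gs[of i'] i Suc unfolding x_def y_def by auto
  then show ?thesis
  proof cases
    case 1
    then show ?thesis using Kxy as xV yV xy y_def[symmetric] unfolding K_def by (auto split: if_splits)
  next
    case 2
    have py: "p y \<in> V" "Suc (h (p y)) = h y" using p_props[OF yV] by auto
    have "p y \<noteq> 0"
    proof
      assume "p y = 0"
      then have "h (p y) = 0" using h_zero by simp
      then show False using py 2 xV h_zero by auto
    qed
    then obtain j where j: "j < n" "pis ! j = p y" using mem_pis py by blast
    have "K (pis ! j) < K y" using j py unfolding K_def by auto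
    then have "j < i" using K_rev j i unfolding y_def by simp
    then have "K (p y) \<le> K x" using K_le[of j i'] j Suc i unfolding x_def by simp
    then have sx: "(if odd (h x) then p y else n - p y) \<le> (if odd (h x) then x else n - x)"
      using py 2 unfolding K_def by simp
    have po: "(odd (h y) \<longrightarrow> p y < y) \<and> (even (h y) \<longrightarrow> y < p y)" using p_order[OF yV] .
    show ?thesis
    proof (cases "odd (h y)")
      case True
      then have "even (h x)" using 2 by simp
      then have "x \<le> p y" using sx xV py by auto
      then show ?thesis using True po as y_def by simp
    next
      case False
      then have "odd (h x)" using 2 by simp
      then have "p y \<le> x" using sx by auto
      then show ?thesis using False po as y_def by simp
    qed
  qed
qed

lemma runidx_pis: "i < n \<Longrightarrow> runidx pis i = h (pis ! i) - 1"
  using runidx_char[of "\<lambda>i. h (pis ! i)" pis] g0 gs ga pis_basic(3) by auto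

lemma lvl_pis: "v \<in> V \<Longrightarrow> v \<noteq> 0 \<Longrightarrow> lvl pis v = h v"
proof -
  assume "v \<in> V" "v \<noteq> 0"
  then obtain j where j: "j < n" "pis ! j = v" using mem_pis by blast
  then show ?thesis using lvl_nth[OF pis_basic(2), of j] runidx_pis[of j] hpos[of j] pis_basic(3) by simp
qed

lemma blk_pis: "blk pis k = S k"
proof (cases "k = 0")
  case True
  have "h 0 = 0" using h_zero by simp
  then show ?thesis unfolding blk_def S_def using h_zero True by auto
next
  case False
  show ?thesis
  proof
    show "blk pis k \<subseteq> S k"
      using blk_iff[OF False pis_basic(2)] pis_basic lvl_pis unfolding S_def by auto
    show "S k \<subseteq> blk pis k"
    proof
      fix v assume "v \<in> S k"
      then have v: "v \<in> V" "h v = k" unfolding S_def by auto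
      then have "v \<noteq> 0" using False h_zero[OF v(1)] v(2) by auto
      then have "lvl pis v = k" "v \<in> set pis" using lvl_pis[OF v(1)] v pis_basic by auto
      then show "v \<in> blk pis k" using blk_iff[OF False pis_basic(2)] by blast
    qed
  qed
qed

end



context itree begin

definition ix :: "nat \<Rightarrow> nat" where
  "ix l = (if odd (h l) then card {j \<in> S (h l - 1). j < p l} else card {j \<in> S (h l - 1). p l < j})"

definition as :: "nat list" where "as = map ix [1..<Suc n]"

lemma dec_as: "l \<in> {1..n} \<Longrightarrow> dec as l = ix l"
  unfolding dec_def as_def by (auto simp del: upt_Suc simp add: nth_map)

lemma fin_S: "finite (S k)" unfolding S_def by simp

lemma pS: "l \<in> V \<Longrightarrow> l \<noteq> 0 \<Longrightarrow> p l \<in> S (h l - 1)"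
  using p_props unfolding S_def by fastforce

lemma dec_mu: "l \<in> set pis \<Longrightarrow> dec as l < mu pis l"
proof -
  assume l: "l \<in> set pis"
  then have lV: "l \<in> V" "l \<noteq> 0" "l \<in> {1..n}" using pis_basic by auto
  have lv: "lvl pis l = h l" using lvl_pis lV by simp
  have po: "(odd (h l) \<longrightarrow> p l < l) \<and> (even (h l) \<longrightarrow> l < p l)" using p_order lV by blast
  have ps: "p l \<in> S (h l - 1)" using pS lV by blast
  show ?thesis
  proof (cases "odd (h l)")
    case True
    have "{j \<in> S (h l - 1). j < p l} \<subset> {j \<in> S (h l - 1). j < l}" using True po ps by auto
    then have "card {j \<in> S (h l - 1). j < p l} < card {j \<in> S (h l - 1). j < l}"
      using fin_S by (intro psubset_card_mono) auto
    then show ?thesis unfolding mu_def Let_def lv blk_pis dec_as[OF lV(3)] ix_def using True by simp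
  next
    case False
    have "{j \<in> S (h l - 1). p l < j} \<subset> {j \<in> S (h l - 1). l < j}" using False po ps by auto
    then have "card {j \<in> S (h l - 1). p l < j} < card {j \<in> S (h l - 1). l < j}"
      using fin_S by (intro psubset_card_mono) auto
    then show ?thesis unfolding mu_def Let_def lv blk_pis dec_as[OF lV(3)] ix_def using False by simp
  qed
qed

lemma canon: "canonical_dp n pis as"
  unfolding canonical_dp_def decorated_perm_def
  using pis_basic dec_mu mu_le_sb as_def order.strict_trans2 by fastforce

lemma parent_eq: "l \<in> set pis \<Longrightarrow> parent pis as l = p l"
proof -
  assume l: "l \<in> set pis"
  then have lV: "l \<in> V" "l \<noteq> 0" "l \<in> {1..n}" using pis_basic by auto
  have lv: "lvl pis l = h l" using lvl_pis lV by simp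
  have ps: "p l \<in> S (h l - 1)" using pS lV by blast
  show ?thesis
    unfolding parent_def Let_def lv blk_pis dec_as[OF lV(3)] ix_def
    using nth_card_less[OF fin_S ps] rev_nth_card_greater[OF fin_S ps] by simp
qed

lemma tree_eq: "tree_of pis as = E"
proof
  show "tree_of pis as \<subseteq> E"
  proof
    fix e assume "e \<in> tree_of pis as"
    then obtain l where l: "l \<in> set pis" "e = {l, parent pis as l}" unfolding tree_of_def by blast
    then have lV: "l \<in> V" "l \<noteq> 0" using pis_basic by auto
    have "adj E l (p l)" using p_props lV by blast
    then show "e \<in> E" using l parent_eq unfolding adj_def by simp
  qed
  show "E \<subseteq> tree_of pis as"
  proof
    fix e assume eE: "e \<in> E"
    then obtain x y where xy: "e = {x, y}" "x \<in> V" "y \<in> V" "x \<noteq> y"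
      using tree(1) unfolding is_graph_def by blast
    have axy: "adj E x y" using eE xy unfolding adj_def by simp
    have h00: "h 0 = 0" using h_zero by simp
    have mem: "{v, p v} \<in> tree_of pis as" if "v \<in> V" "v \<noteq> 0" for v
    proof -
      have "v \<in> set pis" using that pis_basic by auto
      then show ?thesis unfolding tree_of_def using parent_eq by force
    qed
    consider "h y = Suc (h x)" | "h x = Suc (h y)" using h_adj[OF axy] by blast
    then show "e \<in> tree_of pis as"
    proof cases
      case 1
      have "adj E y x" using axy adj_sym by metis
      then have "x = p y" using p_unique[OF \<open>adj E y x\<close>] 1 by simp
      moreover have "y \<noteq> 0"
      proof
        assume "y = 0" then show False using 1 h00 by simp
      qed
      ultimately show ?thesis using mem[OF xy(3)] xy(1) by (simp add: insert_commute)
    next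
      case 2
      then have "y = p x" using p_unique[OF axy] 2 by simp
      moreover have "x \<noteq> 0"
      proof
        assume "x = 0" then show False using 2 h00 by simp
      qed
      ultimately show ?thesis using mem[OF xy(2)] xy(1) by simp
    qed
  qed
qed

lemma surj: "\<exists>pi a. canonical_dp n pi a \<and> tree_of pi a = E"
  using canon tree_eq by blast

end

theorem mainTheorem13:
  fixes n :: nat
  assumes "n \<ge> 1"
  shows "(\<forall>pi a. canonical_dp n pi a \<longrightarrow>
            intransitive_tree {0..n} (tree_of pi a) \<and>
            (\<forall>k. {v \<in> {0..n}. depth (tree_of pi a) v = k} = blk pi k))
         \<and> bij_betw (\<lambda>(pi, a). tree_of pi a) {(pi, a). canonical_dp n pi a}
              {E. intransitive_tree {0..n} E}"
proof
  show "\<forall>pi a. canonical_dp n pi a \<longrightarrow>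
            intransitive_tree {0..n} (tree_of pi a) \<and>
            (\<forall>k. {v \<in> {0..n}. depth (tree_of pi a) v = k} = blk pi k)"
    using part1 by blast
  show "bij_betw (\<lambda>(pi, a). tree_of pi a) {(pi, a). canonical_dp n pi a}
              {E. intransitive_tree {0..n} E}"
    unfolding bij_betw_def
  proof
    show "inj_on (\<lambda>(pi, a). tree_of pi a) {(pi, a). canonical_dp n pi a}"
      by (rule inj_onI) (use inj_part in auto)
    show "(\<lambda>(pi, a). tree_of pi a) ` {(pi, a). canonical_dp n pi a} = {E. intransitive_tree {0..n} E}"
    proof
      show "(\<lambda>(pi, a). tree_of pi a) ` {(pi, a). canonical_dp n pi a} \<subseteq> {E. intransitive_tree {0..n} E}"
        using part1 by auto
      show "{E. intransitive_tree {0..n} E} \<subseteq> (\<lambda>(pi, a). tree_of pi a) ` {(pi, a). canonical_dp n pi a}"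
      proof
        fix E assume "E \<in> {E. intransitive_tree {0..n} E}"
        then interpret itree n E using assms by unfold_locales auto
        obtain pi a where "canonical_dp n pi a" "tree_of pi a = E" using surj by blast
        then show "E \<in> (\<lambda>(pi, a). tree_of pi a) ` {(pi, a). canonical_dp n pi a}" by force
      qed
    qed
  qed
qed


end
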